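(* Let $X=\{x_1,\dots,x_n\}$ be a set of Boolean variables and $\mathcal{C}=\{C_1,\dots,C_m\}$ a set of clauses, each consisting of exactly three positive literals. The graph $G'$ constructed from $(\mathcal{C},X)$ as described in the context is $(P_3+P_5)$-free.
   Context: First construct $(G,L)$: for each $x_i\in X$ introduce two adjacent vertices $x_i$ and $\overline{x}_i$ with $L(x_i)=L(\overline{x}_i)=\{4,5\}$. For each clause $C_j$ introduce two vertices $C_j,C_j'$ with $L(C_j)=L(C_j')=\{1,2,3\}$. Add an edge between every vertex of the form $x_i$ or $\overline{x}_i$ and every vertex of the form $C_j$ or $C_j'$. For each clause $C_j$, fix an order of its literals, say $C_j=\{x_g,x_h,x_i\}$, and add six new vertices $a_{g,j},a_{h,j},a_{i,j},a'_{g,j},a'_{h,j},a'_{i,j}$ with edges $x_ga_{g,j}$, $a_{g,j}C_j$, $x_ha_{h,j}$, $a_{h,j}C_j$, $x_ia_{i,j}$, $a_{i,j}C_j$, $\overline{x}_ga'_{g,j}$, $a'_{g,j}C_j'$, $\overline{x}_ha'_{h,j}$, $a'_{h,j}C_j'$, $\overline{x}_ia'_{i,j}$, $a'_{i,j}C_j'$, and lists $L(a_{g,j})=L(a'_{g,j})=\{1,4\}$, $L(a_{h,j})=L(a'_{h,j})=\{2,4\}$, $L(a_{i,j})=L(a'_{i,j})=\{3,4\}$. Then $G'$ is obtained from $G$ by adding a clique on five new vertices $k_1,\dots,k_5$ and adding an edge between $k_\ell$ and a vertex $u\in V(G)$ if and only if $\ell\notin L(u)$. $P_n$ denotes the path on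 $n$ vertices, $P_3+P_5$ the disjoint union of $P_3$ and $P_5$, and a graph is $H$-free if it has no induced subgraph isomorphic to $H$. *)

theory Defs
  imports Main
begin

definition induced_copy ::
  "'b set \<Rightarrow> ('b \<Rightarrow> 'b \<Rightarrow> bool) \<Rightarrow> 'a set \<Rightarrow> ('a \<Rightarrow> 'a \<Rightarrow> bool) \<Rightarrow> ('b \<Rightarrow> 'a) \<Rightarrow> bool" where
  "induced_copy VH EH VG EG f \<longleftrightarrow>
     inj_on f VH \<and> f ` VH \<subseteq> VG \<and>
     (\<forall>u\<in>VH. \<forall>v\<in>VH. EG (f u) (f v) \<longleftrightarrow> EH u v)"

definition H_free ::
  "'b set \<Rightarrow> ('b \<Rightarrow> 'b \<Rightarrow> bool) \<Rightarrow> 'a set \<Rightarrow> ('a \<Rightarrow> 'a \<Rightarrow> bool) \<Rightarrow> bool" where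
  "H_free VH EH VG EG \<longleftrightarrow> \<not> (\<exists>f. induced_copy VH EH VG EG f)"

definition P3P5_verts :: "nat set" where
  "P3P5_verts = {0..<8}"

definition P3P5_adj :: "nat \<Rightarrow> nat \<Rightarrow> bool" where
  "P3P5_adj u v \<longleftrightarrow>
     (let e = (\<lambda>a b. (u = a \<and> v = b) \<or> (u = b \<and> v = a)) in
      e 0 1 \<or> e 1 2 \<or> e 3 4 \<or> e 4 5 \<or> e 5 6 \<or> e 6 7)"

text \<open>Variables are x_0,...,x_{n-1}; clauses C_0,...,C_{m-1}; clause j is given by
the list cl j = [g,h,i] of its (distinct) variables in the fixed order.
Vertex A k j stands for a_{(cl j ! k), j} and A' k j for a'_{(cl j ! k), j}
(k \<in> {0,1,2} is the position of the literal in the fixed order of C_j);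
K l is the clique vertex k_l (l \<in> {1..5}).\<close>

datatype vert = Xv nat | Xb nat | Cv nat | Cv' nat | Av nat nat | Av' nat nat | Kv nat

definition G_verts :: "nat \<Rightarrow> nat \<Rightarrow> vert set" where
  "G_verts n m =
     {Xv i | i. i < n} \<union> {Xb i | i. i < n} \<union> {Cv j | j. j < m} \<union> {Cv' j | j. j < m} \<union>
     {Av k j | k j. k < 3 \<and> j < m} \<union> {Av' k j | k j. k < 3 \<and> j < m}"

definition Gp_verts :: "nat \<Rightarrow> nat \<Rightarrow> vert set" where
  "Gp_verts n m = G_verts n m \<union> {Kv l | l. l \<in> {1..5}}"

fun lst :: "vert \<Rightarrow> nat set" where
  "lst (Xv i) = {4,5}"
| "lst (Xb i) = {4,5}"
| "lst (Cv j) = {1,2,3}"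
| "lst (Cv' j) = {1,2,3}"
| "lst (Av k j) = {k+1, 4}"
| "lst (Av' k j) = {k+1, 4}"
| "lst (Kv l) = {}"

definition G_edge0 :: "(nat \<Rightarrow> nat list) \<Rightarrow> vert \<Rightarrow> vert \<Rightarrow> bool" where
  "G_edge0 cl u v \<longleftrightarrow>
     (\<exists>i. u = Xv i \<and> v = Xb i) \<or>
     (\<exists>i j. (u = Xv i \<or> u = Xb i) \<and> (v = Cv j \<or> v = Cv' j)) \<or>
     (\<exists>k j. u = Xv (cl j ! k) \<and> v = Av k j) \<or>
     (\<exists>k j. u = Av k j \<and> v = Cv j) \<or>
     (\<exists>k j. u = Xb (cl j ! k) \<and> v = Av' k j) \<or>
     (\<exists>k j. u = Av' k j \<and> v = Cv' j)"

definition G_adj :: "nat \<Rightarrow> nat \<Rightarrow> (nat \<Rightarrow> nat list) \<Rightarrow> vert \<Rightarrow> vert \<Rightarrow> bool" where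
  "G_adj n m cl u v \<longleftrightarrow> u \<in> G_verts n m \<and> v \<in> G_verts n m \<and>
     (G_edge0 cl u v \<or> G_edge0 cl v u)"

definition Gp_adj :: "nat \<Rightarrow> nat \<Rightarrow> (nat \<Rightarrow> nat list) \<Rightarrow> vert \<Rightarrow> vert \<Rightarrow> bool" where
  "Gp_adj n m cl u v \<longleftrightarrow>
     G_adj n m cl u v \<or>
     (\<exists>l l'. u = Kv l \<and> v = Kv l' \<and> l \<in> {1..5} \<and> l' \<in> {1..5} \<and> l \<noteq> l') \<or>
     (\<exists>l. u = Kv l \<and> l \<in> {1..5} \<and> v \<in> G_verts n m \<and> l \<notin> lst v) \<or>
     (\<exists>l. v = Kv l \<and> l \<in> {1..5} \<and> u \<in> G_verts n m \<and> l \<notin> lst u)"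

end

theory Submission imports Defs begin

lemma Kv_notG[simp]: "Kv l \<notin> G_verts n m"
  by (auto simp: G_verts_def)

lemma nbX: "G_adj n m cl (Xv i) u \<longleftrightarrow> Xv i \<in> G_verts n m \<and> u \<in> G_verts n m \<and>
   (u = Xb i \<or> (\<exists>j. u = Cv j \<or> u = Cv' j) \<or> (\<exists>k j. u = Av k j \<and> cl j ! k = i))"
  by (cases u) (auto simp: G_adj_def G_edge0_def)

lemma nbXb: "G_adj n m cl (Xb i) u \<longleftrightarrow> Xb i \<in> G_verts n m \<and> u \<in> G_verts n m \<and>
   (u = Xv i \<or> (\<exists>j. u = Cv j \<or> u = Cv' j) \<or> (\<exists>k j. u = Av' k j \<and> cl j ! k = i))"
  by (cases u) (auto simp: G_adj_def G_edge0_def)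

lemma nbC: "G_adj n m cl (Cv j) u \<longleftrightarrow> Cv j \<in> G_verts n m \<and> u \<in> G_verts n m \<and>
   ((\<exists>i. u = Xv i \<or> u = Xb i) \<or> (\<exists>k. u = Av k j))"
  by (cases u) (auto simp: G_adj_def G_edge0_def)

lemma nbC': "G_adj n m cl (Cv' j) u \<longleftrightarrow> Cv' j \<in> G_verts n m \<and> u \<in> G_verts n m \<and>
   ((\<exists>i. u = Xv i \<or> u = Xb i) \<or> (\<exists>k. u = Av' k j))"
  by (cases u) (auto simp: G_adj_def G_edge0_def)

lemma nbA: "G_adj n m cl (Av k j) u \<longleftrightarrow> Av k j \<in> G_verts n m \<and> u \<in> G_verts n m \<and>
   (u = Xv (cl j ! k) \<or> u = Cv j)"
  by (cases u) (auto simp: G_adj_def G_edge0_def)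

lemma nbA': "G_adj n m cl (Av' k j) u \<longleftrightarrow> Av' k j \<in> G_verts n m \<and> u \<in> G_verts n m \<and>
   (u = Xb (cl j ! k) \<or> u = Cv' j)"
  by (cases u) (auto simp: G_adj_def G_edge0_def)

lemma nbK: "\<not> G_adj n m cl (Kv l) u"
  by (simp add: G_adj_def)

lemma memG[simp]: "Xv i \<in> G_verts n m \<longleftrightarrow> i < n" "Xb i \<in> G_verts n m \<longleftrightarrow> i < n"
  "Cv j \<in> G_verts n m \<longleftrightarrow> j < m" "Cv' j \<in> G_verts n m \<longleftrightarrow> j < m"
  "Av k j \<in> G_verts n m \<longleftrightarrow> k < 3 \<and> j < m" "Av' k j \<in> G_verts n m \<longleftrightarrow> k < 3 \<and> j < m"
  by (auto simp: G_verts_def)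

lemmas nbs = nbX nbXb nbC nbC' nbA nbA' nbK

lemma G_adj_sym: "G_adj n m cl u v = G_adj n m cl v u"
  by (auto simp: G_adj_def)

lemma noP3:
  assumes "l \<in> {1,2,3,5}" "l \<in> lst u" "l \<in> lst v" "l \<in> lst w"
    "G_adj n m cl u v" "G_adj n m cl v w" "u \<noteq> w"
  shows False
proof -
  have a: "G_adj n m cl v u" "G_adj n m cl v w" using assms(5,6) G_adj_sym by metis+
  show False using a assms(1-4,7) by (cases v) (auto simp: nbs)
qed

lemma A_simpl:
  assumes "G_adj n m cl u a" "G_adj n m cl a w" "u \<noteq> w" "\<not> G_adj n m cl u w"
  shows "(\<exists>i. a = Xv i \<or> a = Xb i) \<or> (\<exists>j. a = Cv j \<or> a = Cv' j)"
proof -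
  have a: "G_adj n m cl a u" "G_adj n m cl a w" using assms(1,2) G_adj_sym by metis+
  show ?thesis using a assms(3,4) by (cases a) (auto simp: nbs)
qed

lemma C4:
  assumes "4 \<notin> lst c" "4 \<in> lst u" "4 \<in> lst w" "c \<in> G_verts n m"
    "G_adj n m cl u w" "\<not> G_adj n m cl c u" "\<not> G_adj n m cl c w"
  shows False
proof -
  have a: "G_adj n m cl u w" "G_adj n m cl w u" using assms(5) G_adj_sym by metis+
  have "u \<in> G_verts n m" "w \<in> G_verts n m" using a by (auto simp: G_adj_def)
  then show False using a assms(1-4,6,7) by (cases c; cases u; cases w) (auto simp: nbs)
qed

lemma final:
  assumes "b \<in> G_verts n m" "p \<in> G_verts n m" "q \<in> G_verts n m" "r \<in> G_verts n m"
    "(\<exists>i. b = Xv i \<or> b = Xb i) \<or> (\<exists>j. b = Cv j \<or> b = Cv' j)"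
    "(\<exists>i. p = Xv i \<or> p = Xb i) \<or> (\<exists>j. p = Cv j \<or> p = Cv' j)"
    "(\<exists>i. q = Xv i \<or> q = Xb i) \<or> (\<exists>j. q = Cv j \<or> q = Cv' j)"
    "(\<exists>i. r = Xv i \<or> r = Xb i) \<or> (\<exists>j. r = Cv j \<or> r = Cv' j)"
    "\<not> G_adj n m cl b p" "\<not> G_adj n m cl b q" "\<not> G_adj n m cl b r"
    "G_adj n m cl p q" "G_adj n m cl q r" "p \<noteq> r"
  shows False
  using assms by (auto simp: nbs)

lemma Gp_verts_iff: "v \<in> Gp_verts n m \<longleftrightarrow> v \<in> G_verts n m \<or> (\<exists>l\<in>{1..5}. v = Kv l)"
  by (auto simp: Gp_verts_def)

lemma Gp_adj_G: "u \<in> G_verts n m \<Longrightarrow> v \<in> G_verts n m \<Longrightarrow> Gp_adj n m cl u v = G_adj n m cl u v"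
  by (auto simp: Gp_adj_def)

lemma Gp_adj_KK: "Gp_adj n m cl (Kv l) (Kv l') \<longleftrightarrow> l \<in> {1..5} \<and> l' \<in> {1..5} \<and> l \<noteq> l'"
  by (auto simp: Gp_adj_def G_adj_def)

lemma Gp_adj_KG: "v \<in> G_verts n m \<Longrightarrow> Gp_adj n m cl (Kv l) v \<longleftrightarrow> l \<in> {1..5} \<and> l \<notin> lst v"
  by (auto simp: Gp_adj_def G_adj_def)

lemma Gp_adj_sym: "Gp_adj n m cl u v = Gp_adj n m cl v u"
  unfolding Gp_adj_def using G_adj_sym by blast

lemma nonadjK:
  assumes "l \<in> {1..5}" "x \<in> Gp_verts n m" "x \<noteq> Kv l" "\<not> Gp_adj n m cl (Kv l) x"
  shows "x \<in> G_verts n m \<and> l \<in> lst x"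
  using assms by (auto simp: Gp_verts_iff Gp_adj_KK Gp_adj_KG)

lemma noK:
  assumes "l \<in> {1,2,3,5}" "u \<in> Gp_verts n m" "v \<in> Gp_verts n m" "w \<in> Gp_verts n m"
    "Kv l \<noteq> u" "Kv l \<noteq> v" "Kv l \<noteq> w" "u \<noteq> w"
    "\<not> Gp_adj n m cl (Kv l) u" "\<not> Gp_adj n m cl (Kv l) v" "\<not> Gp_adj n m cl (Kv l) w"
    "Gp_adj n m cl u v" "Gp_adj n m cl v w"
  shows False
proof -
  have l: "l \<in> {1..5}" using assms(1) by auto
  have "u \<in> G_verts n m \<and> l \<in> lst u" "v \<in> G_verts n m \<and> l \<in> lst v" "w \<in> G_verts n m \<and> l \<in> lst w"
    using nonadjK[OF l] assms by metis+
  then show False using noP3[OF assms(1)] assms(8,12,13) Gp_adj_G by metis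
qed

lemma inG:
  assumes "k \<in> Gp_verts n m" "y \<in> Gp_verts n m" "u \<in> Gp_verts n m" "v \<in> Gp_verts n m" "w \<in> Gp_verts n m"
    "k \<noteq> u" "k \<noteq> v" "k \<noteq> w" "k \<noteq> y" "y \<noteq> u" "y \<noteq> v" "y \<noteq> w" "u \<noteq> w"
    "Gp_adj n m cl k y"
    "\<not> Gp_adj n m cl k u" "\<not> Gp_adj n m cl k v" "\<not> Gp_adj n m cl k w"
    "\<not> Gp_adj n m cl y u" "\<not> Gp_adj n m cl y v" "\<not> Gp_adj n m cl y w"
    "Gp_adj n m cl u v" "Gp_adj n m cl v w"
  shows "k \<in> G_verts n m"
proof -
  have nk: "z \<noteq> Kv l" if "l \<in> {1,2,3,5}" "z \<in> {k,y}" for z l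
    using that noK[of l u n m v w cl] assms by auto
  show ?thesis
  proof (rule ccontr)
    assume "k \<notin> G_verts n m"
    then obtain l where l: "l \<in> {1..5}" "k = Kv l" using assms(1) Gp_verts_iff by metis
    then have l4: "l = 4" using nk[of l k] by force
    have yG: "y \<in> G_verts n m"
    proof (rule ccontr)
      assume "y \<notin> G_verts n m"
      then obtain l' where "l' \<in> {1..5}" "y = Kv l'" using assms(2) Gp_verts_iff by metis
      moreover have "l' \<noteq> 4" using assms(9) l l4 calculation by auto
      ultimately show False using nk[of l' y] by force
    qed
    have y4: "4 \<notin> lst y" using assms(14) l l4 yG Gp_adj_KG by auto
    have "u \<in> G_verts n m \<and> 4 \<in> lst u" "v \<in> G_verts n m \<and> 4 \<in> lst v"
      using nonadjK[of 4 u n m cl] nonadjK[of 4 v n m cl] assms l l4 by auto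
    then show False using C4[OF y4, of u v n m cl] yG assms(18,19,21) Gp_adj_G by metis
  qed
qed


theorem lemma3:
  fixes n m :: nat and cl :: "nat \<Rightarrow> nat list"
  assumes clause_size: "\<forall>j<m. length (cl j) = 3 \<and> distinct (cl j)"
      and clause_vars: "\<forall>j<m. set (cl j) \<subseteq> {..<n}"
      and clauses_distinct: "\<forall>j<m. \<forall>j'<m. set (cl j) = set (cl j') \<longrightarrow> j = j'"
  shows "H_free P3P5_verts P3P5_adj (Gp_verts n m) (Gp_adj n m cl)"
  unfolding H_free_def
proof
  assume "\<exists>f. induced_copy P3P5_verts P3P5_adj (Gp_verts n m) (Gp_adj n m cl) f"
  then obtain f where f: "induced_copy P3P5_verts P3P5_adj (Gp_verts n m) (Gp_adj n m cl) f" by blast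
  have adj: "\<And>i j. i < 8 \<Longrightarrow> j < 8 \<Longrightarrow> Gp_adj n m cl (f i) (f j) = P3P5_adj i j"
    using f by (auto simp: induced_copy_def P3P5_verts_def)
  have dist: "\<And>i j. i < 8 \<Longrightarrow> j < 8 \<Longrightarrow> i \<noteq> j \<Longrightarrow> f i \<noteq> f j"
    using f unfolding induced_copy_def P3P5_verts_def inj_on_def by auto
  have vin: "\<And>i. i < 8 \<Longrightarrow> f i \<in> Gp_verts n m"
    using f by (auto simp: induced_copy_def P3P5_verts_def)
  have a01: "Gp_adj n m cl (f 0) (f 1)" using adj[of 0 1] by (simp add: P3P5_adj_def)
  have d01: "f 0 \<noteq> f 1" using dist[of 0 1] by simp
  have a02: "\<not> Gp_adj n m cl (f 0) (f 2)" using adj[of 0 2] by (simp add: P3P5_adj_def)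
  have d02: "f 0 \<noteq> f 2" using dist[of 0 2] by simp
  have a03: "\<not> Gp_adj n m cl (f 0) (f 3)" using adj[of 0 3] by (simp add: P3P5_adj_def)
  have d03: "f 0 \<noteq> f 3" using dist[of 0 3] by simp
  have a04: "\<not> Gp_adj n m cl (f 0) (f 4)" using adj[of 0 4] by (simp add: P3P5_adj_def)
  have d04: "f 0 \<noteq> f 4" using dist[of 0 4] by simp
  have a05: "\<not> Gp_adj n m cl (f 0) (f 5)" using adj[of 0 5] by (simp add: P3P5_adj_def)
  have d05: "f 0 \<noteq> f 5" using dist[of 0 5] by simp
  have a06: "\<not> Gp_adj n m cl (f 0) (f 6)" using adj[of 0 6] by (simp add: P3P5_adj_def)
  have d06: "f 0 \<noteq> f 6" using dist[of 0 6] by simp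
  have a07: "\<not> Gp_adj n m cl (f 0) (f 7)" using adj[of 0 7] by (simp add: P3P5_adj_def)
  have d07: "f 0 \<noteq> f 7" using dist[of 0 7] by simp
  have a10: "Gp_adj n m cl (f 1) (f 0)" using adj[of 1 0] by (simp add: P3P5_adj_def)
  have d10: "f 1 \<noteq> f 0" using dist[of 1 0] by simp
  have a12: "Gp_adj n m cl (f 1) (f 2)" using adj[of 1 2] by (simp add: P3P5_adj_def)
  have d12: "f 1 \<noteq> f 2" using dist[of 1 2] by simp
  have a13: "\<not> Gp_adj n m cl (f 1) (f 3)" using adj[of 1 3] by (simp add: P3P5_adj_def)
  have d13: "f 1 \<noteq> f 3" using dist[of 1 3] by simp
  have a14: "\<not> Gp_adj n m cl (f 1) (f 4)" using adj[of 1 4] by (simp add: P3P5_adj_def)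
  have d14: "f 1 \<noteq> f 4" using dist[of 1 4] by simp
  have a15: "\<not> Gp_adj n m cl (f 1) (f 5)" using adj[of 1 5] by (simp add: P3P5_adj_def)
  have d15: "f 1 \<noteq> f 5" using dist[of 1 5] by simp
  have a16: "\<not> Gp_adj n m cl (f 1) (f 6)" using adj[of 1 6] by (simp add: P3P5_adj_def)
  have d16: "f 1 \<noteq> f 6" using dist[of 1 6] by simp
  have a17: "\<not> Gp_adj n m cl (f 1) (f 7)" using adj[of 1 7] by (simp add: P3P5_adj_def)
  have d17: "f 1 \<noteq> f 7" using dist[of 1 7] by simp
  have a20: "\<not> Gp_adj n m cl (f 2) (f 0)" using adj[of 2 0] by (simp add: P3P5_adj_def)
  have d20: "f 2 \<noteq> f 0" using dist[of 2 0] by simp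
  have a21: "Gp_adj n m cl (f 2) (f 1)" using adj[of 2 1] by (simp add: P3P5_adj_def)
  have d21: "f 2 \<noteq> f 1" using dist[of 2 1] by simp
  have a23: "\<not> Gp_adj n m cl (f 2) (f 3)" using adj[of 2 3] by (simp add: P3P5_adj_def)
  have d23: "f 2 \<noteq> f 3" using dist[of 2 3] by simp
  have a24: "\<not> Gp_adj n m cl (f 2) (f 4)" using adj[of 2 4] by (simp add: P3P5_adj_def)
  have d24: "f 2 \<noteq> f 4" using dist[of 2 4] by simp
  have a25: "\<not> Gp_adj n m cl (f 2) (f 5)" using adj[of 2 5] by (simp add: P3P5_adj_def)
  have d25: "f 2 \<noteq> f 5" using dist[of 2 5] by simp
  have a26: "\<not> Gp_adj n m cl (f 2) (f 6)" using adj[of 2 6] by (simp add: P3P5_adj_def)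
  have d26: "f 2 \<noteq> f 6" using dist[of 2 6] by simp
  have a27: "\<not> Gp_adj n m cl (f 2) (f 7)" using adj[of 2 7] by (simp add: P3P5_adj_def)
  have d27: "f 2 \<noteq> f 7" using dist[of 2 7] by simp
  have a30: "\<not> Gp_adj n m cl (f 3) (f 0)" using adj[of 3 0] by (simp add: P3P5_adj_def)
  have d30: "f 3 \<noteq> f 0" using dist[of 3 0] by simp
  have a31: "\<not> Gp_adj n m cl (f 3) (f 1)" using adj[of 3 1] by (simp add: P3P5_adj_def)
  have d31: "f 3 \<noteq> f 1" using dist[of 3 1] by simp
  have a32: "\<not> Gp_adj n m cl (f 3) (f 2)" using adj[of 3 2] by (simp add: P3P5_adj_def)
  have d32: "f 3 \<noteq> f 2" using dist[of 3 2] by simp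
  have a34: "Gp_adj n m cl (f 3) (f 4)" using adj[of 3 4] by (simp add: P3P5_adj_def)
  have d34: "f 3 \<noteq> f 4" using dist[of 3 4] by simp
  have a35: "\<not> Gp_adj n m cl (f 3) (f 5)" using adj[of 3 5] by (simp add: P3P5_adj_def)
  have d35: "f 3 \<noteq> f 5" using dist[of 3 5] by simp
  have a36: "\<not> Gp_adj n m cl (f 3) (f 6)" using adj[of 3 6] by (simp add: P3P5_adj_def)
  have d36: "f 3 \<noteq> f 6" using dist[of 3 6] by simp
  have a37: "\<not> Gp_adj n m cl (f 3) (f 7)" using adj[of 3 7] by (simp add: P3P5_adj_def)
  have d37: "f 3 \<noteq> f 7" using dist[of 3 7] by simp
  have a40: "\<not> Gp_adj n m cl (f 4) (f 0)" using adj[of 4 0] by (simp add: P3P5_adj_def)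
  have d40: "f 4 \<noteq> f 0" using dist[of 4 0] by simp
  have a41: "\<not> Gp_adj n m cl (f 4) (f 1)" using adj[of 4 1] by (simp add: P3P5_adj_def)
  have d41: "f 4 \<noteq> f 1" using dist[of 4 1] by simp
  have a42: "\<not> Gp_adj n m cl (f 4) (f 2)" using adj[of 4 2] by (simp add: P3P5_adj_def)
  have d42: "f 4 \<noteq> f 2" using dist[of 4 2] by simp
  have a43: "Gp_adj n m cl (f 4) (f 3)" using adj[of 4 3] by (simp add: P3P5_adj_def)
  have d43: "f 4 \<noteq> f 3" using dist[of 4 3] by simp
  have a45: "Gp_adj n m cl (f 4) (f 5)" using adj[of 4 5] by (simp add: P3P5_adj_def)
  have d45: "f 4 \<noteq> f 5" using dist[of 4 5] by simp
  have a46: "\<not> Gp_adj n m cl (f 4) (f 6)" using adj[of 4 6] by (simp add: P3P5_adj_def)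
  have d46: "f 4 \<noteq> f 6" using dist[of 4 6] by simp
  have a47: "\<not> Gp_adj n m cl (f 4) (f 7)" using adj[of 4 7] by (simp add: P3P5_adj_def)
  have d47: "f 4 \<noteq> f 7" using dist[of 4 7] by simp
  have a50: "\<not> Gp_adj n m cl (f 5) (f 0)" using adj[of 5 0] by (simp add: P3P5_adj_def)
  have d50: "f 5 \<noteq> f 0" using dist[of 5 0] by simp
  have a51: "\<not> Gp_adj n m cl (f 5) (f 1)" using adj[of 5 1] by (simp add: P3P5_adj_def)
  have d51: "f 5 \<noteq> f 1" using dist[of 5 1] by simp
  have a52: "\<not> Gp_adj n m cl (f 5) (f 2)" using adj[of 5 2] by (simp add: P3P5_adj_def)
  have d52: "f 5 \<noteq> f 2" using dist[of 5 2] by simp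
  have a53: "\<not> Gp_adj n m cl (f 5) (f 3)" using adj[of 5 3] by (simp add: P3P5_adj_def)
  have d53: "f 5 \<noteq> f 3" using dist[of 5 3] by simp
  have a54: "Gp_adj n m cl (f 5) (f 4)" using adj[of 5 4] by (simp add: P3P5_adj_def)
  have d54: "f 5 \<noteq> f 4" using dist[of 5 4] by simp
  have a56: "Gp_adj n m cl (f 5) (f 6)" using adj[of 5 6] by (simp add: P3P5_adj_def)
  have d56: "f 5 \<noteq> f 6" using dist[of 5 6] by simp
  have a57: "\<not> Gp_adj n m cl (f 5) (f 7)" using adj[of 5 7] by (simp add: P3P5_adj_def)
  have d57: "f 5 \<noteq> f 7" using dist[of 5 7] by simp
  have a60: "\<not> Gp_adj n m cl (f 6) (f 0)" using adj[of 6 0] by (simp add: P3P5_adj_def)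
  have d60: "f 6 \<noteq> f 0" using dist[of 6 0] by simp
  have a61: "\<not> Gp_adj n m cl (f 6) (f 1)" using adj[of 6 1] by (simp add: P3P5_adj_def)
  have d61: "f 6 \<noteq> f 1" using dist[of 6 1] by simp
  have a62: "\<not> Gp_adj n m cl (f 6) (f 2)" using adj[of 6 2] by (simp add: P3P5_adj_def)
  have d62: "f 6 \<noteq> f 2" using dist[of 6 2] by simp
  have a63: "\<not> Gp_adj n m cl (f 6) (f 3)" using adj[of 6 3] by (simp add: P3P5_adj_def)
  have d63: "f 6 \<noteq> f 3" using dist[of 6 3] by simp
  have a64: "\<not> Gp_adj n m cl (f 6) (f 4)" using adj[of 6 4] by (simp add: P3P5_adj_def)
  have d64: "f 6 \<noteq> f 4" using dist[of 6 4] by simp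
  have a65: "Gp_adj n m cl (f 6) (f 5)" using adj[of 6 5] by (simp add: P3P5_adj_def)
  have d65: "f 6 \<noteq> f 5" using dist[of 6 5] by simp
  have a67: "Gp_adj n m cl (f 6) (f 7)" using adj[of 6 7] by (simp add: P3P5_adj_def)
  have d67: "f 6 \<noteq> f 7" using dist[of 6 7] by simp
  have a70: "\<not> Gp_adj n m cl (f 7) (f 0)" using adj[of 7 0] by (simp add: P3P5_adj_def)
  have d70: "f 7 \<noteq> f 0" using dist[of 7 0] by simp
  have a71: "\<not> Gp_adj n m cl (f 7) (f 1)" using adj[of 7 1] by (simp add: P3P5_adj_def)
  have d71: "f 7 \<noteq> f 1" using dist[of 7 1] by simp
  have a72: "\<not> Gp_adj n m cl (f 7) (f 2)" using adj[of 7 2] by (simp add: P3P5_adj_def)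
  have d72: "f 7 \<noteq> f 2" using dist[of 7 2] by simp
  have a73: "\<not> Gp_adj n m cl (f 7) (f 3)" using adj[of 7 3] by (simp add: P3P5_adj_def)
  have d73: "f 7 \<noteq> f 3" using dist[of 7 3] by simp
  have a74: "\<not> Gp_adj n m cl (f 7) (f 4)" using adj[of 7 4] by (simp add: P3P5_adj_def)
  have d74: "f 7 \<noteq> f 4" using dist[of 7 4] by simp
  have a75: "\<not> Gp_adj n m cl (f 7) (f 5)" using adj[of 7 5] by (simp add: P3P5_adj_def)
  have d75: "f 7 \<noteq> f 5" using dist[of 7 5] by simp
  have a76: "Gp_adj n m cl (f 7) (f 6)" using adj[of 7 6] by (simp add: P3P5_adj_def)
  have d76: "f 7 \<noteq> f 6" using dist[of 7 6] by simp
  have V0: "f 0 \<in> Gp_verts n m" using vin[of 0] by simp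
  have V1: "f 1 \<in> Gp_verts n m" using vin[of 1] by simp
  have V2: "f 2 \<in> Gp_verts n m" using vin[of 2] by simp
  have V3: "f 3 \<in> Gp_verts n m" using vin[of 3] by simp
  have V4: "f 4 \<in> Gp_verts n m" using vin[of 4] by simp
  have V5: "f 5 \<in> Gp_verts n m" using vin[of 5] by simp
  have V6: "f 6 \<in> Gp_verts n m" using vin[of 6] by simp
  have V7: "f 7 \<in> Gp_verts n m" using vin[of 7] by simp
  have G0: "f 0 \<in> G_verts n m" by (rule inG[OF V0 V1 V3 V4 V5 d03 d04 d05 d01 d13 d14 d15 d35 a01 a03 a04 a05 a13 a14 a15 a34 a45])
  have G1: "f 1 \<in> G_verts n m" by (rule inG[OF V1 V0 V3 V4 V5 d13 d14 d15 d10 d03 d04 d05 d35 a10 a13 a14 a15 a03 a04 a05 a34 a45])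
  have G2: "f 2 \<in> G_verts n m" by (rule inG[OF V2 V1 V3 V4 V5 d23 d24 d25 d21 d13 d14 d15 d35 a21 a23 a24 a25 a13 a14 a15 a34 a45])
  have G3: "f 3 \<in> G_verts n m" by (rule inG[OF V3 V4 V0 V1 V2 d30 d31 d32 d34 d40 d41 d42 d02 a34 a30 a31 a32 a40 a41 a42 a01 a12])
  have G4: "f 4 \<in> G_verts n m" by (rule inG[OF V4 V3 V0 V1 V2 d40 d41 d42 d43 d30 d31 d32 d02 a43 a40 a41 a42 a30 a31 a32 a01 a12])
  have G5: "f 5 \<in> G_verts n m" by (rule inG[OF V5 V4 V0 V1 V2 d50 d51 d52 d54 d40 d41 d42 d02 a54 a50 a51 a52 a40 a41 a42 a01 a12])
  have G6: "f 6 \<in> G_verts n m" by (rule inG[OF V6 V5 V0 V1 V2 d60 d61 d62 d65 d50 d51 d52 d02 a65 a60 a61 a62 a50 a51 a52 a01 a12])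
  have G7: "f 7 \<in> G_verts n m" by (rule inG[OF V7 V6 V0 V1 V2 d70 d71 d72 d76 d60 d61 d62 d02 a76 a70 a71 a72 a60 a61 a62 a01 a12])
  have T1: "(\<exists>i. f 1 = Xv i \<or> f 1 = Xb i) \<or> (\<exists>j. f 1 = Cv j \<or> f 1 = Cv' j)"
    by (rule A_simpl[of n m cl "f 0" "f 1" "f 2"]) (use a01 a12 a02 d02 G0 G2 G1 Gp_adj_G in auto)
  have T4: "(\<exists>i. f 4 = Xv i \<or> f 4 = Xb i) \<or> (\<exists>j. f 4 = Cv j \<or> f 4 = Cv' j)"
    by (rule A_simpl[of n m cl "f 3" "f 4" "f 5"]) (use a34 a45 a35 d35 G3 G5 G4 Gp_adj_G in auto)
  have T5: "(\<exists>i. f 5 = Xv i \<or> f 5 = Xb i) \<or> (\<exists>j. f 5 = Cv j \<or> f 5 = Cv' j)"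
    by (rule A_simpl[of n m cl "f 4" "f 5" "f 6"]) (use a45 a56 a46 d46 G4 G6 G5 Gp_adj_G in auto)
  have T6: "(\<exists>i. f 6 = Xv i \<or> f 6 = Xb i) \<or> (\<exists>j. f 6 = Cv j \<or> f 6 = Cv' j)"
    by (rule A_simpl[of n m cl "f 5" "f 6" "f 7"]) (use a56 a67 a57 d57 G5 G7 G6 Gp_adj_G in auto)
  show False by (rule final[OF G1 G4 G5 G6 T1 T4 T5 T6]) (use a14 a15 a16 a45 a56 d46 G1 G4 G5 G6 Gp_adj_G in auto)
qed

end
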